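(* Let $p\ge4$, let $\{\mu_a\}$ be a conditional design satisfying Assumption 1, and let $\theta\in\Theta$ be the true parameter with $w=\alpha+B\theta$. Let $A_1,\dots,A_n$ be i.i.d. copies of the observed subset $A$, and let $\hat\theta_n\in\Theta$ be a maximizer of the log-likelihood $l_n(\theta)=\sum_{i=1}^n\ln \mathbf{1}_{A_i}^{\top}(\alpha+B\theta)$ over $\Theta$. Then $\hat\theta_n\to\theta$ almost surely as $n\to\infty$, and consequently $\hat w_n=\alpha+B\hat\theta_n\to w$ almost surely.
   Context: A conditional design on $[p]$ is a collection $\{\mu_a\ge0: a\subseteq[p]\}$ with $\mu_a=0$ if $|a|<2$ and $\sum_{a\ni j}\mu_a=1$ for all $j\in[p]$; the observed subset $A$ is generated from $X$ with $\mathbb{P}(X=j)=w_j$ by $\mathbb{P}(A=a\mid X=j)=\mu_a\mathbb{1}\{j\in a\}$, so $\mathbb{P}(A=a)=\mu_a\mathbf{1}_a^\top w$. $\mathbf{1}_a\in\{0,1\}^p$ is the indicator vector of $a$. $\Theta=\{\theta\in\mathbb{R}^{p-1}:\theta_i\ge0,\sum_i\theta_i\le1\}$, $\alpha=(0,\dots,0,1)^\top\in\mathbb{R}^p$, $B=\begin{pmatrix}I_{p-1}\\ -\mathbf{1}^\top\end{pmatrix}\in\mathbb{R}^{p\times(p-1)}$. Assumption 1: for $u\in\mathbb{R}^{p-1}$, if $\mathbf{1}_a^\top Bu=0$ for all $a$ with $\mu_a>0$, then $u=0$. *)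

theory Defs
  imports "HOL-Probability.Probability"
begin

text \<open>Index set [p] = {1..p}; vectors in R^p and R^(p-1) are functions nat => real,
  only their values on {1..p} resp. {1..p-1} matter.\<close>

definition alpha :: "nat \<Rightarrow> nat \<Rightarrow> real" where
  "alpha p j = (if j = p then 1 else 0)"

text \<open>B u for B = (I_{p-1} ; -1^T), u in R^(p-1)\<close>
definition Bmul :: "nat \<Rightarrow> (nat \<Rightarrow> real) \<Rightarrow> nat \<Rightarrow> real" where
  "Bmul p u j = (if j < p then u j else - (\<Sum>i\<in>{1..p-1}. u i))"

definition ind_dot :: "nat set \<Rightarrow> (nat \<Rightarrow> real) \<Rightarrow> real" where
  "ind_dot a v = (\<Sum>j\<in>a. v j)"

definition conditional_design :: "nat \<Rightarrow> (nat set \<Rightarrow> real) \<Rightarrow> bool" where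
  "conditional_design p \<mu> \<longleftrightarrow>
     (\<forall>a\<in>Pow {1..p}. 0 \<le> \<mu> a) \<and>
     (\<forall>a\<in>Pow {1..p}. card a < 2 \<longrightarrow> \<mu> a = 0) \<and>
     (\<forall>j\<in>{1..p}. (\<Sum>a\<in>{a\<in>Pow {1..p}. j \<in> a}. \<mu> a) = 1)"

definition assumption1 :: "nat \<Rightarrow> (nat set \<Rightarrow> real) \<Rightarrow> bool" where
  "assumption1 p \<mu> \<longleftrightarrow>
     (\<forall>u::nat \<Rightarrow> real. (\<forall>a\<in>Pow {1..p}. \<mu> a > 0 \<longrightarrow> ind_dot a (Bmul p u) = 0)
        \<longrightarrow> (\<forall>i\<in>{1..p-1}. u i = 0))"

definition Theta :: "nat \<Rightarrow> (nat \<Rightarrow> real) set" where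
  "Theta p = {\<theta>. (\<forall>i\<in>{1..p-1}. 0 \<le> \<theta> i) \<and> (\<Sum>i\<in>{1..p-1}. \<theta> i) \<le> 1}"

definition loglik :: "nat \<Rightarrow> nat \<Rightarrow> (nat \<Rightarrow> nat set) \<Rightarrow> (nat \<Rightarrow> real) \<Rightarrow> ereal" where
  "loglik p n S \<theta> =
     (if \<forall>i<n. ind_dot (S i) (\<lambda>j. alpha p j + Bmul p \<theta> j) > 0
      then ereal (\<Sum>i<n. ln (ind_dot (S i) (\<lambda>j. alpha p j + Bmul p \<theta> j)))
      else -\<infinity>)"

end

theory Submission
  imports Defs "HOL-Library.Infinite_Set"
begin

lemma (in prob_space) slln_indicator:
  fixes A :: "nat \<Rightarrow> 'a \<Rightarrow> 'b" and a :: 'b and \<pi> :: real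
  assumes Am: "\<And>i. A i \<in> M \<rightarrow>\<^sub>M count_space UNIV"
    and ind: "indep_vars (\<lambda>_. count_space UNIV) A UNIV"
    and pr: "\<And>i. prob {x\<in>space M. A i x = a} = \<pi>"
    and eps: "\<epsilon> > 0"
  shows "AE x in M. eventually (\<lambda>n. \<bar>(\<Sum>i<Suc n. if A i x = a then 1 else 0) - real (Suc n) * \<pi>\<bar> < real (Suc n) * \<epsilon>) sequentially"
proof -
  define X where "X = (\<lambda>i x. if A i x = a then 1 else (0::real))"
  have Xm[measurable]: "X i \<in> borel_measurable M" for i
  proof -
    have "X i = (\<lambda>s. if s = a then 1 else 0) \<circ> A i" by (auto simp: X_def)
    moreover have "(\<lambda>s. if s = a then 1 else (0::real)) \<in> count_space UNIV \<rightarrow>\<^sub>M borel" by simp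
    ultimately show ?thesis using Am by (metis measurable_comp)
  qed
  have indX: "indep_vars (\<lambda>_. borel) X UNIV"
    unfolding X_def
    by (rule indep_vars_compose2[OF ind, where Y="\<lambda>i s. if s = a then 1 else (0::real)"]) simp
  have EX: "expectation (X i) = \<pi>" for i
  proof -
    have "expectation (X i) = expectation (indicator {x\<in>space M. A i x = a})"
      by (intro Bochner_Integration.integral_cong) (auto simp: X_def indicator_def)
    also have "\<dots> = \<pi>" using pr[of i] by (simp add: Int_absorb2)
    finally show ?thesis .
  qed
  define E where "E n = {x\<in>space M. \<bar>(\<Sum>i\<in>{..<Suc n}. X i x) - real (Suc n) * \<pi>\<bar> \<ge> real (Suc n) * \<epsilon>}" for n
  have Em: "E n \<in> sets M" for n unfolding E_def by measurable
  have Eb: "prob (E n) \<le> 2 * exp (-2 * \<epsilon>\<^sup>2) ^ Suc n" for n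
  proof -
    interpret H: Hoeffding_ineq M "{..<Suc n}" X "\<lambda>_. 0" "\<lambda>_. 1" "real (Suc n) * \<pi>"
    proof unfold_locales
      show "indep_vars (\<lambda>_. borel) X {..<Suc n}" using indep_vars_subset[OF indX] by blast
    qed (simp_all add: EX, auto simp: X_def)
    have "prob (E n) \<le> 2 * exp (-2 * (real (Suc n) * \<epsilon>)\<^sup>2 / (\<Sum>i\<in>{..<Suc n}. (1 - 0)\<^sup>2))"
      unfolding E_def using eps by (intro H.Hoeffding_ineq_abs_ge) auto
    also have "-2 * (real (Suc n) * \<epsilon>)\<^sup>2 / (\<Sum>i\<in>{..<Suc n}. (1 - 0)\<^sup>2) = real (Suc n) * (-2 * \<epsilon>\<^sup>2)"
      by (simp add: power2_eq_square)
    also have "exp (real (Suc n) * (-2 * \<epsilon>\<^sup>2)) = exp (-2 * \<epsilon>\<^sup>2) ^ Suc n"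
      by (subst exp_of_nat_mult[symmetric]) simp
    finally show ?thesis .
  qed
  have "summable (\<lambda>n. 2 * exp (-2 * \<epsilon>\<^sup>2) ^ Suc n)"
    using eps by (intro summable_mult summable_Suc_iff[THEN iffD2] summable_geometric) auto
  then have sE: "summable (\<lambda>n. measure M (E n))"
    by (rule summable_comparison_test'[where N=0]) (use Eb in auto)
  have "AE x in M. eventually (\<lambda>n. x \<in> space M - E n) sequentially"
    by (rule borel_cantelli_AE1) (use Em sE in \<open>auto simp: emeasure_eq_measure\<close>)
  then show ?thesis
    by eventually_elim (auto elim!: eventually_mono simp: E_def X_def not_le)
qed

lemma abs_div_lt: "(c::real) > 0 \<Longrightarrow> \<bar>z\<bar> < c*e \<Longrightarrow> \<bar>z/c\<bar> < e"
  by (simp add: abs_divide divide_less_eq mult.commute)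

lemma (in prob_space) slln_indicator_lim:
  fixes A :: "nat \<Rightarrow> 'a \<Rightarrow> 'b" and a :: 'b and \<pi> :: real
  assumes Am: "\<And>i. A i \<in> M \<rightarrow>\<^sub>M count_space UNIV"
    and ind: "indep_vars (\<lambda>_. count_space UNIV) A UNIV"
    and pr: "\<And>i. prob {x\<in>space M. A i x = a} = \<pi>"
  shows "AE x in M. (\<lambda>n. (\<Sum>i<n. if A i x = a then 1 else 0) / real n) \<longlonglongrightarrow> \<pi>"
proof -
  have "AE x in M. \<forall>k::nat. eventually (\<lambda>n. \<bar>(\<Sum>i<Suc n. if A i x = a then 1 else 0) - real (Suc n) * \<pi>\<bar> < real (Suc n) * (1 / real (Suc k))) sequentially"
    unfolding AE_all_countable
    by (intro allI slln_indicator[OF Am ind pr]) auto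
  then show ?thesis
  proof eventually_elim
    case (elim x)
    define f where "f n = (\<Sum>i<n. if A i x = a then 1 else 0) / real n" for n
    have "(\<lambda>n. f (Suc n)) \<longlonglongrightarrow> \<pi>"
    proof (rule LIMSEQ_I)
      fix r :: real assume "0 < r"
      then obtain k where k: "1 / real (Suc k) < r"
        by (metis nat_approx_posE One_nat_def)
      have "eventually (\<lambda>n. \<bar>(\<Sum>i<Suc n. if A i x = a then 1 else 0) - real (Suc n) * \<pi>\<bar> < real (Suc n) * (1 / real (Suc k))) sequentially"
        using elim by blast
      then obtain N where N: "\<And>n. n \<ge> N \<Longrightarrow> \<bar>(\<Sum>i<Suc n. if A i x = a then 1 else 0) - real (Suc n) * \<pi>\<bar> < real (Suc n) * (1 / real (Suc k))"
        by (auto simp: eventually_sequentially)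
      show "\<exists>no. \<forall>n\<ge>no. norm (f (Suc n) - \<pi>) < r"
      proof (intro exI allI impI)
        fix n assume "n \<ge> N"
        have "f (Suc n) - \<pi> = ((\<Sum>i<Suc n. if A i x = a then 1 else 0) - real (Suc n) * \<pi>) / real (Suc n)"
          unfolding f_def by (simp add: field_simps)
        also have "\<bar>\<dots>\<bar> < 1 / real (Suc k)"
          by (rule abs_div_lt[OF _ N[OF \<open>n \<ge> N\<close>]]) simp
        finally show "norm (f (Suc n) - \<pi>) < r" using k by simp
      qed
    qed
    then have "f \<longlonglongrightarrow> \<pi>" by (rule LIMSEQ_imp_Suc)
    then show ?case by (simp only: f_def[abs_def])
  qed
qed


lemma bw_finite:
  fixes u :: "nat \<Rightarrow> nat \<Rightarrow> real"
  assumes "finite I" and bnd: "\<And>n i. i \<in> I \<Longrightarrow> \<bar>u n i\<bar> \<le> 1"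
  shows "\<exists>r l. strict_mono r \<and> (\<forall>i\<in>I. (\<lambda>n. u (r n) i) \<longlonglongrightarrow> l i)"
  using assms(1) bnd
proof (induction I rule: finite_induct)
  case empty
  show ?case by (rule exI[of _ id]) (auto simp: strict_mono_def)
next
  case (insert i I)
  then obtain r l where r: "strict_mono r" and l: "\<forall>j\<in>I. (\<lambda>n. u (r n) j) \<longlonglongrightarrow> l j"
    by auto
  have "bounded (range (\<lambda>n. u (r n) i))"
    unfolding bounded_iff using insert.prems by auto
  then obtain l0 r' where r': "strict_mono r'" and l0: "((\<lambda>n. u (r n) i) \<circ> r') \<longlonglongrightarrow> l0"
    using bounded_imp_convergent_subsequence by blast
  show ?case
  proof (intro exI conjI ballI)
    show "strict_mono (r \<circ> r')" using r r' by (rule strict_mono_o)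
    fix j assume "j \<in> insert i I"
    then show "(\<lambda>n. u ((r \<circ> r') n) j) \<longlonglongrightarrow> (l(i := l0)) j"
    proof
      assume "j = i" then show ?thesis using l0 by (simp add: o_def)
    next
      assume j: "j \<in> I"
      then have "j \<noteq> i" using insert.hyps by auto
      have "((\<lambda>n. u (r n) j) \<circ> r') \<longlonglongrightarrow> l j"
        using LIMSEQ_subseq_LIMSEQ[OF l[rule_format, OF j] r'] .
      then show ?thesis using \<open>j \<noteq> i\<close> by (simp add: o_def)
    qed
  qed
qed

lemma ind_dot_Bmul_tendsto:
  fixes v :: "nat \<Rightarrow> nat \<Rightarrow> real"
  assumes a: "a \<subseteq> {1..p}" and lim: "\<And>i. i \<in> {1..p-1} \<Longrightarrow> (\<lambda>n. v n i) \<longlonglongrightarrow> w i"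
  shows "(\<lambda>n. ind_dot a (Bmul p (v n))) \<longlonglongrightarrow> ind_dot a (Bmul p w)"
  unfolding ind_dot_def
proof (intro tendsto_sum)
  fix j assume "j \<in> a"
  then have j: "1 \<le> j" "j \<le> p" using a by auto
  show "(\<lambda>n. Bmul p (v n) j) \<longlonglongrightarrow> Bmul p w j"
  proof (cases "j < p")
    case True
    then show ?thesis using lim[of j] j by (simp add: Bmul_def)
  next
    case False
    then show ?thesis unfolding Bmul_def
      by (simp, intro tendsto_minus tendsto_sum lim, auto)
  qed
qed

lemma limit_zero:
  fixes u :: "nat \<Rightarrow> nat \<Rightarrow> real"
  assumes bnd: "\<And>n i. i\<in>{1..p-1} \<Longrightarrow> \<bar>u n i\<bar> \<le> 1"
   and lim: "\<And>a. a\<in>Pow{1..p} \<Longrightarrow> \<mu> a > 0 \<Longrightarrow> (\<lambda>n. ind_dot a (Bmul p (u n))) \<longlonglongrightarrow> 0"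
   and A1: "assumption1 p \<mu>"
   and i: "i\<in>{1..p-1}"
 shows "(\<lambda>n. u n i) \<longlonglongrightarrow> 0"
proof (rule ccontr)
  assume "\<not> (\<lambda>n. u n i) \<longlonglongrightarrow> 0"
  then obtain \<epsilon> where \<epsilon>: "\<epsilon> > 0" and unb: "\<forall>N. \<exists>n\<ge>N. \<bar>u n i\<bar> \<ge> \<epsilon>"
    unfolding LIMSEQ_iff by (auto simp: not_less)
  define S where "S = {n. \<bar>u n i\<bar> \<ge> \<epsilon>}"
  have infS: "infinite S" unfolding S_def infinite_nat_iff_unbounded_le using unb by auto
  define s where "s = enumerate S"
  have s: "strict_mono s" using infS by (simp add: s_def strict_mono_enumerate)
  have sS: "\<bar>u (s n) i\<bar> \<ge> \<epsilon>" for n using enumerate_in_set[OF infS, of n] by (simp add: s_def S_def)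
  obtain r l where r: "strict_mono r" and l: "\<forall>j\<in>{1..p-1}. (\<lambda>n. u (s (r n)) j) \<longlonglongrightarrow> l j"
    using bw_finite[of "{1..p-1}" "\<lambda>n. u (s n)"] bnd by auto
  define w where "w j = (if j \<in> {1..p-1} then l j else 0)" for j
  have "w i = 0"
  proof -
    have "\<forall>a\<in>Pow {1..p}. \<mu> a > 0 \<longrightarrow> ind_dot a (Bmul p w) = 0"
    proof (intro ballI impI)
      fix a assume a: "a \<in> Pow {1..p}" and m: "\<mu> a > 0"
      have t1: "(\<lambda>n. ind_dot a (Bmul p (u (s (r n))))) \<longlonglongrightarrow> ind_dot a (Bmul p w)"
        by (rule ind_dot_Bmul_tendsto) (use a l w_def in auto)
      have "((\<lambda>n. ind_dot a (Bmul p (u n))) \<circ> (s \<circ> r)) \<longlonglongrightarrow> 0"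
        by (rule LIMSEQ_subseq_LIMSEQ[OF lim[OF a m] strict_mono_o[OF s r]])
      then have t2: "(\<lambda>n. ind_dot a (Bmul p (u (s (r n))))) \<longlonglongrightarrow> 0" by (simp add: o_def)
      show "ind_dot a (Bmul p w) = 0" using LIMSEQ_unique[OF t1 t2] .
    qed
    then show ?thesis using A1 i unfolding assumption1_def by blast
  qed
  moreover have "\<epsilon> \<le> \<bar>l i\<bar>"
    by (rule LIMSEQ_le_const[OF tendsto_rabs[OF l[rule_format, OF i]]]) (use sS in auto)
  ultimately show False using \<epsilon> i by (simp add: w_def)
qed


lemma theta_w_nonneg:
  assumes "\<theta> \<in> Theta p" "j \<in> {1..p}"
  shows "0 \<le> alpha p j + Bmul p \<theta> j"
proof (cases "j < p")
  case True then show ?thesis using assms by (auto simp: Theta_def alpha_def Bmul_def)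
next
  case False then have "j = p" using assms by auto
  then show ?thesis using assms False by (auto simp: Theta_def alpha_def Bmul_def)
qed

lemma theta_coord_le1:
  assumes "\<theta> \<in> Theta p" "i \<in> {1..p-1}"
  shows "0 \<le> \<theta> i" "\<theta> i \<le> 1"
proof -
  show "0 \<le> \<theta> i" using assms by (auto simp: Theta_def)
  have "\<theta> i \<le> (\<Sum>k\<in>{1..p-1}. \<theta> k)"
    by (rule member_le_sum) (use assms in \<open>auto simp: Theta_def\<close>)
  then show "\<theta> i \<le> 1" using assms by (auto simp: Theta_def)
qed

lemma theta_w_sum:
  assumes "p \<ge> 1"
  shows "(\<Sum>j\<in>{1..p}. alpha p j + Bmul p \<theta> j) = 1"
proof -
  have e: "{1..p} = insert p {1..p-1}" using assms by auto
  have "(\<Sum>j\<in>{1..p}. alpha p j + Bmul p \<theta> j) = (alpha p p + Bmul p \<theta> p) + (\<Sum>j\<in>{1..p-1}. alpha p j + Bmul p \<theta> j)"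
    unfolding e by (subst sum.insert) auto
  also have "(\<Sum>j\<in>{1..p-1}. alpha p j + Bmul p \<theta> j) = (\<Sum>j\<in>{1..p-1}. \<theta> j)"
    by (rule sum.cong) (auto simp: alpha_def Bmul_def)
  finally show ?thesis by (simp add: alpha_def Bmul_def)
qed

lemma q_bounds:
  assumes "\<theta> \<in> Theta p" "p \<ge> 1" "a \<subseteq> {1..p}"
  shows "0 \<le> ind_dot a (\<lambda>j. alpha p j + Bmul p \<theta> j)" "ind_dot a (\<lambda>j. alpha p j + Bmul p \<theta> j) \<le> 1"
proof -
  show "0 \<le> ind_dot a (\<lambda>j. alpha p j + Bmul p \<theta> j)"
    unfolding ind_dot_def using assms by (intro sum_nonneg theta_w_nonneg) auto
  have "ind_dot a (\<lambda>j. alpha p j + Bmul p \<theta> j) \<le> (\<Sum>j\<in>{1..p}. alpha p j + Bmul p \<theta> j)"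
    unfolding ind_dot_def using assms by (intro sum_mono2 theta_w_nonneg) auto
  then show "ind_dot a (\<lambda>j. alpha p j + Bmul p \<theta> j) \<le> 1" using theta_w_sum[OF assms(2)] by simp
qed

lemma design_sum:
  assumes cd: "conditional_design p \<mu>" and p: "p \<ge> 1"
  shows "(\<Sum>a\<in>Pow {1..p}. \<mu> a * ind_dot a (\<lambda>j. alpha p j + Bmul p \<theta> j)) = 1"
proof -
  define w where "w j = alpha p j + Bmul p \<theta> j" for j
  have "(\<Sum>a\<in>Pow {1..p}. \<mu> a * ind_dot a w) = (\<Sum>a\<in>Pow {1..p}. \<Sum>j\<in>{1..p}. if j \<in> a then \<mu> a * w j else 0)"
  proof (rule sum.cong)
    fix a assume "a \<in> Pow {1..p}"
    then have "a = {1..p} \<inter> a" by auto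
    then have "ind_dot a w = (\<Sum>j\<in>{1..p}. if j \<in> a then w j else 0)"
      unfolding ind_dot_def by (metis sum.inter_restrict finite_atLeastAtMost)
    then show "\<mu> a * ind_dot a w = (\<Sum>j\<in>{1..p}. if j \<in> a then \<mu> a * w j else 0)"
      by (auto simp: sum_distrib_left intro!: sum.cong)
  qed simp
  also have "\<dots> = (\<Sum>j\<in>{1..p}. \<Sum>a\<in>Pow {1..p}. if j \<in> a then \<mu> a * w j else 0)"
    by (rule sum.swap)
  also have "\<dots> = (\<Sum>j\<in>{1..p}. w j * (\<Sum>a\<in>{a\<in>Pow {1..p}. j \<in> a}. \<mu> a))"
    by (intro sum.cong refl) (simp add: sum.inter_filter[symmetric] sum_distrib_left mult.commute)
  also have "\<dots> = (\<Sum>j\<in>{1..p}. w j)"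
    using cd unfolding conditional_design_def by (intro sum.cong) auto
  also have "\<dots> = 1" unfolding w_def by (rule theta_w_sum[OF p])
  finally show ?thesis unfolding w_def .
qed

lemma mu_le1:
  assumes cd: "conditional_design p \<mu>" and a: "a \<in> Pow {1..p}"
  shows "\<mu> a \<le> 1"
proof (cases "a = {}")
  case True then show ?thesis using cd a unfolding conditional_design_def by auto
next
  case False
  then obtain j where j: "j \<in> a" by auto
  have "\<mu> a \<le> (\<Sum>a\<in>{a\<in>Pow {1..p}. j \<in> a}. \<mu> a)"
    by (rule member_le_sum) (use cd a j in \<open>auto simp: conditional_design_def\<close>)
  also have "\<dots> = 1" using cd a j unfolding conditional_design_def by auto
  finally show ?thesis .
qed

lemma ind_dot_Bmul_diff:
  "ind_dot a (Bmul p (\<lambda>i. f i - g i)) = ind_dot a (\<lambda>j. alpha p j + Bmul p f j) - ind_dot a (\<lambda>j. alpha p j + Bmul p g j)"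
  unfolding ind_dot_def Bmul_def sum_subtractf[symmetric] by (intro sum.cong) (auto simp: sum_subtractf)


lemma pi_h_eq:
  fixes P R :: real
  assumes "P > 0" "R \<ge> 0"
  shows "P * (sqrt (R / P) - 1) = - (sqrt P - sqrt R)\<^sup>2 / 2 + R / 2 - P / 2"
proof -
  have "P * sqrt (R / P) = sqrt P * sqrt R"
    using assms by (simp add: real_sqrt_divide field_simps)
  moreover have "(sqrt P - sqrt R)\<^sup>2 = P - 2 * sqrt P * sqrt R + R"
    using assms by (simp add: power2_diff)
  ultimately show ?thesis by (simp add: algebra_simps)
qed

lemma core_conv:
  fixes T :: "'b set" and \<pi> :: "'b \<Rightarrow> real" and r f :: "nat \<Rightarrow> 'b \<Rightarrow> real"
  assumes fin: "finite T" and pos: "\<And>a. a \<in> T \<Longrightarrow> \<pi> a > 0" and s1: "(\<Sum>a\<in>T. \<pi> a) = 1"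
    and rb: "\<And>n a. a \<in> T \<Longrightarrow> 0 \<le> r n a \<and> r n a \<le> 1" and rs: "\<And>n. (\<Sum>a\<in>T. r n a) \<le> 1"
    and fl: "\<And>a. a \<in> T \<Longrightarrow> (\<lambda>n. f n a) \<longlonglongrightarrow> \<pi> a"
    and ineq: "eventually (\<lambda>n. 0 \<le> (\<Sum>a\<in>T. f n a * (sqrt (r n a / \<pi> a) - 1))) sequentially"
  shows "\<And>a. a \<in> T \<Longrightarrow> (\<lambda>n. r n a) \<longlonglongrightarrow> \<pi> a"
proof -
  define K where "K a = 1 / sqrt (\<pi> a) + 1" for a
  define h where "h n a = sqrt (r n a / \<pi> a) - 1" for n a
  define E where "E n = (\<Sum>a\<in>T. \<bar>f n a - \<pi> a\<bar> * K a)" for n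
  define D where "D n = (\<Sum>a\<in>T. (sqrt (\<pi> a) - sqrt (r n a))\<^sup>2)" for n
  have hK: "\<bar>h n a\<bar> \<le> K a" if a: "a \<in> T" for n a
  proof -
    have "sqrt (r n a / \<pi> a) \<le> sqrt (1 / \<pi> a)"
      using rb[OF a] pos[OF a] by (intro real_sqrt_le_mono divide_right_mono) auto
    moreover have "0 \<le> sqrt (r n a / \<pi> a)" using rb[OF a] pos[OF a] by simp
    moreover have "sqrt (1 / \<pi> a) = 1 / sqrt (\<pi> a)" by (simp add: real_sqrt_divide)
    ultimately show ?thesis unfolding h_def K_def by (simp only: abs_le_iff) linarith
  qed
  have E0: "E \<longlonglongrightarrow> 0"
  proof -
    have "(\<lambda>n. E n) \<longlonglongrightarrow> (\<Sum>a\<in>T. \<bar>\<pi> a - \<pi> a\<bar> * K a)"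
      unfolding E_def by (intro tendsto_intros fl)
    then show ?thesis by simp
  qed
  have DE: "eventually (\<lambda>n. D n \<le> 2 * E n) sequentially"
    using ineq
  proof eventually_elim
    case (elim n)
    have "(\<Sum>a\<in>T. f n a * h n a) = (\<Sum>a\<in>T. \<pi> a * h n a) + (\<Sum>a\<in>T. (f n a - \<pi> a) * h n a)"
      by (simp add: sum.distrib[symmetric] algebra_simps)
    also have "(\<Sum>a\<in>T. \<pi> a * h n a) = (\<Sum>a\<in>T. - (sqrt (\<pi> a) - sqrt (r n a))\<^sup>2 / 2 + r n a / 2 - \<pi> a / 2)"
      unfolding h_def using pos rb by (intro sum.cong pi_h_eq) auto
    also have "\<dots> = - D n / 2 + (\<Sum>a\<in>T. r n a) / 2 - 1 / 2"
      by (simp add: D_def sum.distrib sum_subtractf sum_divide_distrib[symmetric] s1 sum_negf)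
    also have "(\<Sum>a\<in>T. (f n a - \<pi> a) * h n a) \<le> E n"
      unfolding E_def
    proof (rule sum_mono)
      fix a assume a: "a \<in> T"
      have "(f n a - \<pi> a) * h n a \<le> \<bar>f n a - \<pi> a\<bar> * \<bar>h n a\<bar>" by (simp add: abs_mult[symmetric])
      also have "\<dots> \<le> \<bar>f n a - \<pi> a\<bar> * K a" using hK[OF a] by (intro mult_left_mono) auto
      finally show "(f n a - \<pi> a) * h n a \<le> \<bar>f n a - \<pi> a\<bar> * K a" .
    qed
    finally have "0 \<le> - D n / 2 + (\<Sum>a\<in>T. r n a) / 2 - 1 / 2 + E n"
      using elim unfolding h_def by linarith
    then show ?case using rs[of n] by linarith
  qed
  fix a assume a: "a \<in> T"
  have d0: "(\<lambda>n. (sqrt (\<pi> a) - sqrt (r n a))\<^sup>2) \<longlonglongrightarrow> 0"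
  proof (rule tendsto_sandwich[where f="\<lambda>_. 0" and h="\<lambda>n. 2 * E n"])
    show "eventually (\<lambda>n. 0 \<le> (sqrt (\<pi> a) - sqrt (r n a))\<^sup>2) sequentially" by simp
    show "eventually (\<lambda>n. (sqrt (\<pi> a) - sqrt (r n a))\<^sup>2 \<le> 2 * E n) sequentially"
      using DE
    proof eventually_elim
      case (elim n)
      have "(sqrt (\<pi> a) - sqrt (r n a))\<^sup>2 \<le> D n"
        unfolding D_def using fin a by (intro member_le_sum) auto
      then show ?case using elim by linarith
    qed
    show "(\<lambda>n. 2 * E n) \<longlonglongrightarrow> 0" using tendsto_mult_right_zero[OF E0, of 2] by (simp add: mult.commute)
  qed simp
  have "(\<lambda>n. sqrt ((sqrt (\<pi> a) - sqrt (r n a))\<^sup>2)) \<longlonglongrightarrow> sqrt 0"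
    by (rule tendsto_real_sqrt[OF d0])
  then have "(\<lambda>n. \<bar>sqrt (r n a) - sqrt (\<pi> a)\<bar>) \<longlonglongrightarrow> 0" by (simp add: abs_minus_commute)
  then have "(\<lambda>n. sqrt (r n a)) \<longlonglongrightarrow> sqrt (\<pi> a)"
    by (simp add: LIM_zero_iff tendsto_rabs_zero_iff)
  then have "(\<lambda>n. (sqrt (r n a))\<^sup>2) \<longlonglongrightarrow> (sqrt (\<pi> a))\<^sup>2"
    by (rule tendsto_power)
  moreover have "(\<lambda>n. (sqrt (r n a))\<^sup>2) = (\<lambda>n. r n a)" using rb[OF a] by (simp add: fun_eq_iff)
  moreover have "(sqrt (\<pi> a))\<^sup>2 = \<pi> a" using pos[OF a] by simp
  ultimately show "(\<lambda>n. r n a) \<longlonglongrightarrow> \<pi> a" by simp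
qed


lemma ln_le_sqrt: "(t::real) > 0 \<Longrightarrow> ln t \<le> 2 * (sqrt t - 1)"
proof -
  assume t: "t > 0"
  have "ln t = 2 * ln (sqrt t)" using t by (simp add: ln_sqrt)
  also have "ln (sqrt t) \<le> sqrt t - 1" using t by (intro ln_le_minus_one) simp
  finally show ?thesis by simp
qed

lemma sum_group:
  fixes g :: "'b \<Rightarrow> real"
  assumes "finite T" "\<And>i. i < n \<Longrightarrow> S i \<in> T"
  shows "(\<Sum>i<n. g (S i)) = (\<Sum>a\<in>T. (\<Sum>i<n. if S i = a then 1 else 0) * g a)"
proof -
  have "(\<Sum>i<n. g (S i)) = (\<Sum>i<n. \<Sum>a\<in>T. if S i = a then g a else 0)"
    using assms by (intro sum.cong refl) (simp add: sum.delta')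
  also have "\<dots> = (\<Sum>a\<in>T. \<Sum>i<n. if S i = a then g a else 0)" by (rule sum.swap)
  also have "\<dots> = (\<Sum>a\<in>T. (\<Sum>i<n. if S i = a then 1 else 0) * g a)"
    by (intro sum.cong refl) (auto simp: sum_distrib_right intro!: sum.cong)
  finally show ?thesis .
qed

lemma loglik_ineq:
  fixes S :: "nat \<Rightarrow> nat set" and p :: nat
  defines "q \<equiv> \<lambda>a t. ind_dot a (\<lambda>j. alpha p j + Bmul p t j)"
  assumes T: "T = {a\<in>Pow {1..p}. \<mu> a * q a \<theta> > 0}"
    and mu0: "\<And>a. a \<in> Pow {1..p} \<Longrightarrow> 0 \<le> \<mu> a"
    and q0: "\<And>a. a \<in> Pow {1..p} \<Longrightarrow> 0 \<le> q a \<theta>"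
    and n: "n > 0" and ST: "\<And>i. S i \<in> T"
    and ll: "loglik p n S \<theta> \<le> loglik p n S \<theta>'"
  shows "0 \<le> (\<Sum>a\<in>T. ((\<Sum>i<n. if S i = a then 1 else 0) / real n) * (sqrt (\<mu> a * q a \<theta>' / (\<mu> a * q a \<theta>)) - 1))"
proof -
  have finT: "finite T" unfolding T by simp
  have Tpos: "\<mu> a > 0" "q a \<theta> > 0" if "a \<in> T" for a
  proof -
    have "\<mu> a * q a \<theta> > 0" "0 \<le> \<mu> a" "0 \<le> q a \<theta>" using that mu0 q0 unfolding T by auto
    then show "\<mu> a > 0" "q a \<theta> > 0" by (auto simp: zero_less_mult_iff)
  qed
  have c0: "\<forall>i<n. q (S i) \<theta> > 0" using Tpos ST by auto
  then have l0: "loglik p n S \<theta> = ereal (\<Sum>i<n. ln (q (S i) \<theta>))"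
    unfolding loglik_def q_def by simp
  have c1: "\<forall>i<n. q (S i) \<theta>' > 0"
  proof (rule ccontr)
    assume "\<not> ?thesis"
    then have "loglik p n S \<theta>' = - \<infinity>" unfolding loglik_def q_def by auto
    then show False using ll l0 by simp
  qed
  then have "loglik p n S \<theta>' = ereal (\<Sum>i<n. ln (q (S i) \<theta>'))"
    unfolding loglik_def q_def by simp
  with ll l0 have le: "(\<Sum>i<n. ln (q (S i) \<theta>)) \<le> (\<Sum>i<n. ln (q (S i) \<theta>'))" by simp
  define h where "h a = sqrt (\<mu> a * q a \<theta>' / (\<mu> a * q a \<theta>)) - 1" for a
  have "0 \<le> (\<Sum>i<n. ln (q (S i) \<theta>') - ln (q (S i) \<theta>))" using le by (simp add: sum_subtractf)
  also have "\<dots> \<le> (\<Sum>i<n. 2 * h (S i))"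
  proof (rule sum_mono)
    fix i assume "i \<in> {..<n}"
    then have i: "q (S i) \<theta>' > 0" "q (S i) \<theta> > 0" "\<mu> (S i) > 0" using c1 Tpos ST by auto
    have "ln (q (S i) \<theta>') - ln (q (S i) \<theta>) = ln (\<mu> (S i) * q (S i) \<theta>' / (\<mu> (S i) * q (S i) \<theta>))"
      using i by (simp add: ln_div)
    also have "\<dots> \<le> 2 * h (S i)" unfolding h_def using i by (intro ln_le_sqrt) simp
    finally show "ln (q (S i) \<theta>') - ln (q (S i) \<theta>) \<le> 2 * h (S i)" .
  qed
  also have "\<dots> = 2 * (\<Sum>a\<in>T. (\<Sum>i<n. if S i = a then 1 else 0) * h a)"
    using sum_group[OF finT, of n S h] ST by (simp only: sum_distrib_left[symmetric])
  finally have "0 \<le> (\<Sum>a\<in>T. (\<Sum>i<n. if S i = a then 1 else 0) * h a)" by simp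
  then have "0 \<le> (\<Sum>a\<in>T. (\<Sum>i<n. if S i = a then 1 else 0) * h a) / real n" using n by simp
  also have "(\<Sum>a\<in>T. (\<Sum>i<n. if S i = a then 1 else 0) * h a) / real n
      = (\<Sum>a\<in>T. ((\<Sum>i<n. if S i = a then 1 else 0) / real n) * h a)"
    unfolding sum_divide_distrib[of _ T] by (intro sum.cong refl) simp
  finally show ?thesis unfolding h_def .
qed


theorem mainTheorem4:
  fixes p :: nat and \<mu> :: "nat set \<Rightarrow> real" and \<theta> :: "nat \<Rightarrow> real"
    and M :: "'s measure" and A :: "nat \<Rightarrow> 's \<Rightarrow> nat set"
    and \<theta>hat :: "nat \<Rightarrow> 's \<Rightarrow> nat \<Rightarrow> real"
  assumes "p \<ge> 4"
    and "conditional_design p \<mu>"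
    and "assumption1 p \<mu>"
    and "\<theta> \<in> Theta p"
    and "prob_space M"
    and "\<forall>i. A i \<in> measurable M (count_space UNIV)"
    and "prob_space.indep_vars M (\<lambda>_. count_space UNIV) A UNIV"
    and "\<forall>i. \<forall>a\<in>Pow {1..p}.
           measure M {x\<in>space M. A i x = a} = \<mu> a * ind_dot a (\<lambda>j. alpha p j + Bmul p \<theta> j)"
    and "\<forall>n. \<forall>x\<in>space M. \<theta>hat n x \<in> Theta p \<and>
           (\<forall>\<theta>'\<in>Theta p. loglik p n (\<lambda>i. A i x) \<theta>' \<le> loglik p n (\<lambda>i. A i x) (\<theta>hat n x))"
  shows "AE x in M. (\<forall>i\<in>{1..p-1}. (\<lambda>n. \<theta>hat n x i) \<longlonglongrightarrow> \<theta> i) \<and>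
           (\<forall>j\<in>{1..p}. (\<lambda>n. alpha p j + Bmul p (\<theta>hat n x) j) \<longlonglongrightarrow> alpha p j + Bmul p \<theta> j)"
proof -
  note cd = assms(2) and A1 = assms(3) and th = assms(4) and Am = assms(6) and ind = assms(7)
    and pr = assms(8) and mx = assms(9)
  interpret prob_space M by (rule assms(5))
  have p1: "p \<ge> 1" using assms(1) by simp
  define q where "q a t = ind_dot a (\<lambda>j. alpha p j + Bmul p t j)" for a t
  define \<pi> where "\<pi> a = \<mu> a * q a \<theta>" for a
  define P where "P = Pow {1..p}"
  define T where "T = {a\<in>P. \<pi> a > 0}"
  have finP: "finite P" unfolding P_def by simp
  have finT: "finite T" unfolding T_def using finP by simp
  have TP: "T \<subseteq> P" unfolding T_def by auto
  have mu0: "0 \<le> \<mu> a" if "a \<in> P" for a using cd that unfolding conditional_design_def P_def by auto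
  have mu1: "\<mu> a \<le> 1" if "a \<in> P" for a using mu_le1[OF cd] that unfolding P_def by auto
  have qb: "0 \<le> q a t" "q a t \<le> 1" if "a \<in> P" "t \<in> Theta p" for a t
    using q_bounds[OF that(2) p1] that unfolding P_def q_def by auto
  have rsum: "(\<Sum>a\<in>P. \<mu> a * q a t) = 1" for t
    using design_sum[OF cd p1] unfolding P_def q_def by simp
  have pi0: "0 \<le> \<pi> a" if "a \<in> P" for a using mu0[OF that] qb[OF that th] by (simp add: \<pi>_def)
  have sT: "(\<Sum>a\<in>T. \<pi> a) = 1"
  proof -
    have "(\<Sum>a\<in>T. \<pi> a) = (\<Sum>a\<in>P. \<pi> a)"
      using finP TP pi0 by (intro sum.mono_neutral_left) (force simp: T_def less_le)+
    then show ?thesis using rsum[of \<theta>] by (simp add: \<pi>_def)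
  qed
  have Ts: "\<pi> a > 0" if "a \<in> T" for a using that by (simp add: T_def)
  have Tmu: "\<mu> a > 0" if "a \<in> T" for a
    using Ts[OF that] mu0 TP that qb[of a \<theta>] th by (auto simp: \<pi>_def zero_less_mult_iff)
  have Am': "A i \<in> M \<rightarrow>\<^sub>M count_space UNIV" for i using Am by simp
  have ev: "{x\<in>space M. A i x = a} \<in> events" for i a
  proof -
    have "A i -` {a} \<inter> space M \<in> events" by (rule measurable_sets[OF Am']) simp
    moreover have "A i -` {a} \<inter> space M = {x\<in>space M. A i x = a}" by auto
    ultimately show ?thesis by simp
  qed
  have prA: "prob {x\<in>space M. A i x = a} = \<pi> a" if "a \<in> P" for i a
    using pr that unfolding \<pi>_def q_def P_def by auto
  have AE1: "AE x in M. \<forall>i. A i x \<in> T"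
    unfolding AE_all_countable
  proof
    fix i
    have "{x\<in>space M. A i x \<in> T} = (\<Union>a\<in>T. {x\<in>space M. A i x = a})" by auto
    then have "prob {x\<in>space M. A i x \<in> T} = (\<Sum>a\<in>T. prob {x\<in>space M. A i x = a})"
      using finT ev by (simp, intro measure_finite_Union) (auto simp: disjoint_family_on_def)
    also have "\<dots> = 1" using prA TP sT by (simp add: subset_iff)
    finally have "AE x in M. x \<in> {x\<in>space M. A i x \<in> T}" by (rule AE_prob_1)
    then show "AE x in M. A i x \<in> T" by auto
  qed
  have AE2: "AE x in M. \<forall>a\<in>T. (\<lambda>n. (\<Sum>i<n. if A i x = a then 1 else 0) / real n) \<longlonglongrightarrow> \<pi> a"
    using finT
  proof (rule AE_finite_allI)
    fix a assume "a \<in> T"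
    then show "AE x in M. (\<lambda>n. (\<Sum>i<n. if A i x = a then 1 else 0) / real n) \<longlonglongrightarrow> \<pi> a"
      using TP prA by (intro slln_indicator_lim[OF Am' ind]) auto
  qed
  show ?thesis
    using AE1 AE2 AE_space
  proof eventually_elim
    case (elim x)
    then have G1: "\<And>i. A i x \<in> T" and x: "x \<in> space M"
      and G2: "\<And>a. a \<in> T \<Longrightarrow> (\<lambda>n. (\<Sum>i<n. if A i x = a then 1 else 0) / real n) \<longlonglongrightarrow> \<pi> a"
      by auto
    have thn: "\<theta>hat n x \<in> Theta p" for n using mx x by auto
    define r where "r n a = \<mu> a * q a (\<theta>hat n x)" for n a
    have rb: "0 \<le> r n a \<and> r n a \<le> 1" if "a \<in> P" for n a
      using mu0[OF that] mu1[OF that] qb[OF that thn[of n]] unfolding r_def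
      by (auto intro: mult_le_one)
    have rP: "(\<Sum>a\<in>P. r n a) = 1" for n using rsum unfolding r_def by simp
    have rT: "(\<Sum>a\<in>T. r n a) \<le> 1" for n
    proof -
      have "(\<Sum>a\<in>T. r n a) \<le> (\<Sum>a\<in>P. r n a)" using finP TP rb by (intro sum_mono2) auto
      then show ?thesis using rP[of n] by simp
    qed
    have ineq: "eventually (\<lambda>n. 0 \<le> (\<Sum>a\<in>T. ((\<Sum>i<n. if A i x = a then 1 else 0) / real n) * (sqrt (r n a / \<pi> a) - 1))) sequentially"
      unfolding eventually_sequentially
    proof (intro exI allI impI)
      fix n :: nat assume "1 \<le> n"
      have ll: "loglik p n (\<lambda>i. A i x) \<theta> \<le> loglik p n (\<lambda>i. A i x) (\<theta>hat n x)"
        using mx x th by auto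
      show "0 \<le> (\<Sum>a\<in>T. ((\<Sum>i<n. if A i x = a then 1 else 0) / real n) * (sqrt (r n a / \<pi> a) - 1))"
        using loglik_ineq[where T=T and \<mu>=\<mu> and p=p and \<theta>=\<theta> and n=n and S="\<lambda>i. A i x" and \<theta>'="\<theta>hat n x"] \<open>1 \<le> n\<close> G1 ll mu0 qb th
        unfolding r_def \<pi>_def q_def T_def P_def by auto
    qed
    have rT_lim: "(\<lambda>n. r n a) \<longlonglongrightarrow> \<pi> a" if "a \<in> T" for a
      by (rule core_conv[OF finT Ts sT _ rT G2 ineq that]) (use rb TP in auto)
    have qlim: "(\<lambda>n. q a (\<theta>hat n x)) \<longlonglongrightarrow> q a \<theta>" if a: "a \<in> P" "\<mu> a > 0" for a
    proof (cases "a \<in> T")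
      case True
      have "(\<lambda>n. r n a / \<mu> a) \<longlonglongrightarrow> \<pi> a / \<mu> a" by (intro tendsto_divide rT_lim True tendsto_const) (use a in auto)
      then show ?thesis using a by (simp add: r_def \<pi>_def)
    next
      case False
      then have "\<pi> a = 0" using a pi0[of a] by (auto simp: T_def)
      then have q0: "q a \<theta> = 0" using a by (simp add: \<pi>_def)
      have "(\<lambda>n. r n a) \<longlonglongrightarrow> 0"
      proof (rule tendsto_sandwich[where f="\<lambda>_. 0" and h="\<lambda>n. 1 - (\<Sum>b\<in>T. r n b)"])
        show "eventually (\<lambda>n. 0 \<le> r n a) sequentially" using rb a by auto
        show "eventually (\<lambda>n. r n a \<le> 1 - (\<Sum>b\<in>T. r n b)) sequentially"
        proof (intro always_eventually allI)
          fix n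
          have "(\<Sum>b\<in>insert a T. r n b) \<le> (\<Sum>b\<in>P. r n b)"
            using finP TP a rb by (intro sum_mono2) auto
          then show "r n a \<le> 1 - (\<Sum>b\<in>T. r n b)" using False finT rP[of n] by simp
        qed
        have "(\<lambda>n. 1 - (\<Sum>b\<in>T. r n b)) \<longlonglongrightarrow> 1 - (\<Sum>b\<in>T. \<pi> b)"
          by (intro tendsto_intros rT_lim)
        then show "(\<lambda>n. 1 - (\<Sum>b\<in>T. r n b)) \<longlonglongrightarrow> 0" using sT by simp
      qed simp
      then have "(\<lambda>n. r n a / \<mu> a) \<longlonglongrightarrow> 0 / \<mu> a" by (intro tendsto_divide tendsto_const) (use a in auto)
      then show ?thesis using a q0 by (simp add: r_def)
    qed
    define u where "u n i = \<theta>hat n x i - \<theta> i" for n i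
    have ulim: "(\<lambda>n. u n i) \<longlonglongrightarrow> 0" if i: "i \<in> {1..p-1}" for i
    proof (rule limit_zero[OF _ _ A1 i])
      fix n i assume i: "i \<in> {1..p-1}"
      show "\<bar>u n i\<bar> \<le> 1" using theta_coord_le1[OF thn[of n] i] theta_coord_le1[OF th i]
        unfolding u_def by linarith
    next
      fix a assume a: "a \<in> Pow {1..p}" "\<mu> a > 0"
      have "(\<lambda>n. q a (\<theta>hat n x) - q a \<theta>) \<longlonglongrightarrow> 0" using qlim[of a] a unfolding P_def
        by (simp add: LIM_zero_iff)
      then show "(\<lambda>n. ind_dot a (Bmul p (u n))) \<longlonglongrightarrow> 0"
        unfolding u_def ind_dot_Bmul_diff q_def .
    qed
    have C1: "(\<lambda>n. \<theta>hat n x i) \<longlonglongrightarrow> \<theta> i" if i: "i \<in> {1..p-1}" for i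
      using ulim[OF i] unfolding u_def by (simp add: LIM_zero_iff)
    have C2: "(\<lambda>n. alpha p j + Bmul p (\<theta>hat n x) j) \<longlonglongrightarrow> alpha p j + Bmul p \<theta> j" if j: "j \<in> {1..p}" for j
    proof (cases "j < p")
      case True
      then show ?thesis using C1[of j] j unfolding Bmul_def by (intro tendsto_add tendsto_const) auto
    next
      case False
      then have "(\<lambda>n. alpha p j + - (\<Sum>i\<in>{1..p-1}. \<theta>hat n x i)) \<longlonglongrightarrow> alpha p j + - (\<Sum>i\<in>{1..p-1}. \<theta> i)"
        by (intro tendsto_add tendsto_const tendsto_minus tendsto_sum C1)
      then show ?thesis unfolding Bmul_def using False by simp
    qed
    show ?case using C1 C2 by blast
  qed
qed

end
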